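(* Let $L\ge 1$, let $\mathbf a\in\mathbb Z^L\setminus\{\mathbf 0\}$, let $\mathbf h_1,\ldots,\mathbf h_M\in\mathbb R^L\setminus\{\mathbf 0\}$ be channel states with probabilities $f_1,\ldots,f_M>0$, $\sum_m f_m=1$, and let $\bar P>0$. For $m=1,\ldots,M$ and $P\ge 0$ put $$R_m(P)=\tfrac12\log_2\frac{1+P\|\mathbf h_m\|^2}{\|\mathbf a\|^2+P\big(\|\mathbf h_m\|^2\|\mathbf a\|^2-(\mathbf h_m^T\mathbf a)^2\big)} ,$$ and consider the problem $DP1^{(s)}$: maximize $\sum_{m=1}^M f_m\max(0,R_m(P_m))$ over $P_1,\ldots,P_M$ subject to $\sum_{m=1}^M f_mP_m\le\bar P$ and $P_m\ge 0$ for all $m$. Let $\mathcal G=\{m:\|\mathbf h_m\|^2>\|\mathbf h_m\|^2\|\mathbf a\|^2-(\mathbf h_m^T\mathbf a)^2\}$ (the good set). For $\lambda>0$ define $P_m^{KKT}(\lambda)=\frac1\lambda-\frac1{\|\mathbf h_m\|^2}$ if $\mathbf h_m$ is collinear with $\mathbf a$, and otherwise $$P_m^{KKT}(\lambda)=\frac{-b_m+\sqrt{b_m^2-4d_mc_m(\lambda)}}{2d_m},$$ where $d_m=\|\mathbf h_m\|^2(\|\mathbf h_m\|^2\|\mathbf a\|^2-(\mathbf h_m^T\mathbf a)^2)$, $b_m=2\|\mathbf h_m\|^2\|\mathbf a\|^2-(\mathbf h_m^T\mathbf a)^2$, $c_m(\lambda)=\|\mathbf a\|^2-\frac{(\mathbf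 h_m^T\mathbf a)^2}{\lambda}$. Let $$\lambda_o=\min\Big\{\lambda>0\;\Big|\;R_m(P_m^{KKT}(\lambda))=R_m'(P_m^{KKT}(\lambda))\,P_m^{KKT}(\lambda)\text{ for some } m\in\mathcal G\Big\}$$ and $\bar P_o=\sum_{m\in\mathcal G}f_mP_m^{KKT}(\lambda_o)$. If $\bar P>\bar P_o$, then the optimal active set of $DP1^{(s)}$ equals $\mathcal G$, i.e., every optimal solution $(P_1^*,\ldots,P_M^* )$ satisfies $\{m: P_m^*>0\}=\mathcal G$.
   Context: Two nonzero vectors $\mathbf x_1,\mathbf x_2$ are collinear if $\mathbf x_1=c\,\mathbf x_2$ for some real $c$. The active set of a feasible solution $(P_1,\ldots,P_M)$ of $DP1^{(s)}$ is $\{m\in\{1,\ldots,M\}: P_m>0\}$; an optimal active set is the active set of an optimal solution. $R_m'$ denotes the derivative of $R_m$ in $P$. This is the symmetric power allocation policy (all $L$ users use the same power $P_m$ in state $m$) for compute-and-forward over a fading channel with unit-variance noise. *)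

theory Defs
  imports "HOL-Analysis.Analysis"
begin

definition collinear_vec :: "'a::real_vector \<Rightarrow> 'a \<Rightarrow> bool" where
  "collinear_vec x y \<longleftrightarrow> (\<exists>c::real. x = c *\<^sub>R y)"

definition rate :: "'a::real_inner \<Rightarrow> 'a \<Rightarrow> real \<Rightarrow> real" where
  "rate a h P = (1/2) * log 2 ((1 + P * (norm h)\<^sup>2) /
      ((norm a)\<^sup>2 + P * ((norm h)\<^sup>2 * (norm a)\<^sup>2 - (inner h a)\<^sup>2)))"

definition dcoef :: "'a::real_inner \<Rightarrow> 'a \<Rightarrow> real" where
  "dcoef a h = (norm h)\<^sup>2 * ((norm h)\<^sup>2 * (norm a)\<^sup>2 - (inner h a)\<^sup>2)"

definition bcoef :: "'a::real_inner \<Rightarrow> 'a \<Rightarrow> real" where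
  "bcoef a h = 2 * (norm h)\<^sup>2 * (norm a)\<^sup>2 - (inner h a)\<^sup>2"

definition ccoef :: "'a::real_inner \<Rightarrow> 'a \<Rightarrow> real \<Rightarrow> real" where
  "ccoef a h lam = (norm a)\<^sup>2 - (inner h a)\<^sup>2 / lam"

definition PKKT :: "'a::real_inner \<Rightarrow> 'a \<Rightarrow> real \<Rightarrow> real" where
  "PKKT a h lam =
     (if collinear_vec h a then 1 / lam - 1 / (norm h)\<^sup>2
      else (- bcoef a h + sqrt ((bcoef a h)\<^sup>2 - 4 * dcoef a h * ccoef a h lam))
           / (2 * dcoef a h))"

definition good_set :: "'a::real_inner \<Rightarrow> (nat \<Rightarrow> 'a) \<Rightarrow> nat \<Rightarrow> nat set" where
  "good_set a h M = {m \<in> {1..M}. (norm (h m))\<^sup>2 > (norm (h m))\<^sup>2 * (norm a)\<^sup>2 - (inner (h m) a)\<^sup>2}"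

definition DP1_feasible :: "(nat \<Rightarrow> real) \<Rightarrow> nat \<Rightarrow> real \<Rightarrow> (nat \<Rightarrow> real) \<Rightarrow> bool" where
  "DP1_feasible f M Pbar P \<longleftrightarrow> (\<Sum>m=1..M. f m * P m) \<le> Pbar \<and> (\<forall>m\<in>{1..M}. P m \<ge> 0)"

definition DP1_obj :: "'a::real_inner \<Rightarrow> (nat \<Rightarrow> 'a) \<Rightarrow> (nat \<Rightarrow> real) \<Rightarrow> nat \<Rightarrow> (nat \<Rightarrow> real) \<Rightarrow> real" where
  "DP1_obj a h f M P = (\<Sum>m=1..M. f m * max 0 (rate a (h m) (P m)))"

definition DP1_optimal :: "'a::real_inner \<Rightarrow> (nat \<Rightarrow> 'a) \<Rightarrow> (nat \<Rightarrow> real) \<Rightarrow> nat \<Rightarrow> real \<Rightarrow> (nat \<Rightarrow> real) \<Rightarrow> bool" where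
  "DP1_optimal a h f M Pbar P \<longleftrightarrow> DP1_feasible f M Pbar P \<and>
     (\<forall>Q. DP1_feasible f M Pbar Q \<longrightarrow> DP1_obj a h f M Q \<le> DP1_obj a h f M P)"

definition active_set :: "nat \<Rightarrow> (nat \<Rightarrow> real) \<Rightarrow> nat set" where
  "active_set M P = {m \<in> {1..M}. P m > 0}"

definition tangency :: "'a::real_inner \<Rightarrow> 'a \<Rightarrow> real \<Rightarrow> bool" where
  "tangency a h lam \<longleftrightarrow>
     rate a h (PKKT a h lam) = deriv (rate a h) (PKKT a h lam) * PKKT a h lam"

end

theory Submission
  imports Defs
begin


definition qf :: "'a::real_inner \<Rightarrow> 'a \<Rightarrow> real \<Rightarrow> real" where
  "qf a h P = dcoef a h * P^2 + bcoef a h * P + (norm a)\<^sup>2"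

definition kap :: real where "kap = 1 / (2 * ln 2)"

definition rd :: "'a::real_inner \<Rightarrow> 'a \<Rightarrow> real \<Rightarrow> real" where
  "rd a h P = kap * (inner h a)\<^sup>2 / qf a h P"

definition sf :: "'a::real_inner \<Rightarrow> 'a \<Rightarrow> real \<Rightarrow> real" where
  "sf a h P = rate a h P - rd a h P * P"

lemma kap_pos: "kap > 0" unfolding kap_def by simp

lemma gen_deriv:
  fixes H A D P :: real
  assumes n: "1 + P * H > 0" and d: "A + P * D > 0"
  shows "((\<lambda>P. (1/2) * log 2 ((1 + P * H) / (A + P * D))) has_real_derivative
     1 / (2 * ln 2) * (H * A - D) / ((1 + P * H) * (A + P * D))) (at P)"
proof -
  have g: "\<And>N Dn L X::real. N > 0 \<Longrightarrow> Dn > 0 \<Longrightarrow> L > 0 \<Longrightarrow>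
     (1/2) * (X / Dn^2 / (N / Dn) / L) = 1 / (2 * L) * X / (N * Dn)"
    by (simp add: field_simps power2_eq_square)
  have g2: "\<And>N Dn X Y::real. N > 0 \<Longrightarrow> Dn > 0 \<Longrightarrow>
     (X * 2 - Y * 2) / (ln 2 * (N * Dn) * 4) = (X - Y) * Dn / (2 * (Dn^2 * N * ln 2))"
    by (simp add: field_simps power2_eq_square)
  have x: "H * (A + P * D) - (1 + P * H) * D = H * A - D" by (simp add: algebra_simps)
  have e: "(1/2) * ((H * (A + P * D) - (1 + P * H) * D) / (A + P * D)^2 / ((1 + P * H) / (A + P * D)) / ln 2) =
     1 / (2 * ln 2) * (H * A - D) / ((1 + P * H) * (A + P * D))"
    using g[OF n d ln_gt_zero[of 2], of "H * (A + P * D) - (1 + P * H) * D"] unfolding x by simp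
  show ?thesis
    apply (rule DERIV_cong[OF _ e])
    using n d apply (auto intro!: derivative_eq_intros)
    apply (rule g2) using n d by auto
qed

lemma disc_gen: fixes H A g l :: real assumes "l > 0"
  shows "(2 * H * A - g)^2 - 4 * (H * (H * A - g)) * (A - g / l) = (H * A - (H * A - g))^2 + 4 * (H * (H * A - g)) * g / l"
  using assms by (simp add: field_simps power2_eq_square)

lemma quad_gen: fixes d b r :: real assumes "d > 0"
  shows "d * ((r - b) / (2 * d))^2 + b * ((r - b) / (2 * d)) = (r^2 - b^2) / (4 * d)"
  using assms by (simp add: field_simps power2_eq_square)

locale goodh =
  fixes a h :: "'a::real_inner"
  assumes A1: "(norm a)\<^sup>2 \<ge> 1"
    and good: "(norm h)\<^sup>2 > (norm h)\<^sup>2 * (norm a)\<^sup>2 - (inner h a)\<^sup>2"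
begin

abbreviation "H \<equiv> (norm h)\<^sup>2"
abbreviation "A \<equiv> (norm a)\<^sup>2"
abbreviation "g \<equiv> (inner h a)\<^sup>2"
abbreviation "D \<equiv> (norm h)\<^sup>2 * (norm a)\<^sup>2 - (inner h a)\<^sup>2"

lemma D_nonneg: "D \<ge> 0"
proof -
  have "\<bar>inner h a\<bar> \<le> norm h * norm a" by (rule Cauchy_Schwarz_ineq2)
  hence "\<bar>inner h a\<bar>^2 \<le> (norm h * norm a)^2" by (meson abs_ge_zero power_mono)
  hence "g \<le> H * A" by (simp only: power2_abs power_mult_distrib)
  thus ?thesis by linarith
qed

lemma g_pos: "g > 0"
proof -
  have "H * A \<ge> H" using A1 by (simp add: mult_le_cancel_left1)
  thus ?thesis using good by linarith
qed

lemma H_pos: "H > 0" using good D_nonneg by linarith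

lemma b_pos: "bcoef a h > 0"
proof -
  have "bcoef a h = H * A + D" unfolding bcoef_def by simp
  moreover have "H * A > 0" using H_pos A1 by (meson less_le_trans mult_pos_pos zero_less_one)
  ultimately show ?thesis using D_nonneg by linarith
qed

lemma d_nonneg: "dcoef a h \<ge> 0" unfolding dcoef_def using D_nonneg by simp

lemma q_eq: "qf a h P = (1 + P * H) * (A + P * D)"
  unfolding qf_def dcoef_def bcoef_def by (simp add: algebra_simps power2_eq_square)

lemma q_pos: assumes "P \<ge> 0" shows "qf a h P > 0"
proof -
  have "P * H \<ge> 0" "P * D \<ge> 0" using mult_nonneg_nonneg[OF assms D_nonneg] assms H_pos by auto
  hence "1 + P * H > 0" "A + P * D > 0" using A1 by linarith+
  thus ?thesis unfolding q_eq by (rule mult_pos_pos)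
qed

lemma q_mono: "0 \<le> x \<Longrightarrow> x < y \<Longrightarrow> qf a h x < qf a h y"
proof -
  assume xy: "0 \<le> x" "x < y"
  have "qf a h y - qf a h x = (y - x) * (dcoef a h * (y + x) + bcoef a h)"
    unfolding qf_def by (simp add: algebra_simps power2_eq_square)
  moreover have "dcoef a h * (y + x) + bcoef a h > 0"
    using d_nonneg b_pos xy by (simp add: add_nonneg_pos)
  moreover have "(y - x) * (dcoef a h * (y + x) + bcoef a h) > 0"
    using calculation(2) xy by (intro mult_pos_pos) auto
  ultimately show ?thesis by linarith
qed

lemma rate_deriv:
  assumes "P \<ge> 0"
  shows "(rate a h has_real_derivative kap * g / qf a h P) (at P)"
proof -
  have "P * H \<ge> 0" "P * D \<ge> 0" using mult_nonneg_nonneg[OF assms D_nonneg] assms H_pos by auto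
  hence n: "1 + P * H > 0" and d: "A + P * D > 0" using A1 by linarith+
  have num: "H * A - D = g" by simp
  show ?thesis using gen_deriv[OF n d] unfolding num q_eq kap_def rate_def by simp
qed

lemma rate_deriv': "P \<ge> 0 \<Longrightarrow> (rate a h has_real_derivative rd a h P) (at P)"
  unfolding rd_def using rate_deriv by (simp add: mult.assoc)

lemma rd_mono: assumes "0 \<le> x" "x < y" shows "rd a h y < rd a h x"
proof -
  have "kap * g > 0" using kap_pos g_pos by simp
  moreover have "qf a h x < qf a h y" "qf a h x > 0" using q_mono[OF assms] q_pos assms by auto
  ultimately show ?thesis unfolding rd_def by (simp add: divide_strict_left_mono)
qed

lemma rd_pos: "P \<ge> 0 \<Longrightarrow> rd a h P > 0"
  unfolding rd_def using kap_pos g_pos q_pos by simp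

lemma concave:
  assumes "0 \<le> x" "0 \<le> y" "x \<noteq> y"
  shows "rate a h x < rate a h y + rd a h y * (x - y)"
proof (cases "y < x")
  case True
  obtain z where z: "y < z" "z < x" "rate a h x - rate a h y = (x - y) * rd a h z"
    using MVT2[OF True, of "rate a h" "rd a h"] rate_deriv' assms by force
  have "rd a h z < rd a h y" using rd_mono[of y z] z assms by simp
  hence "(x - y) * rd a h z < (x - y) * rd a h y" using True by simp
  thus ?thesis using z by (simp add: algebra_simps)
next
  case False
  hence xy: "x < y" using assms by simp
  obtain z where z: "x < z" "z < y" "rate a h y - rate a h x = (y - x) * rd a h z"
    using MVT2[OF xy, of "rate a h" "rd a h"] rate_deriv' assms by force
  have "rd a h y < rd a h z" using rd_mono[of z y] z assms by simp
  hence "(y - x) * rd a h y < (y - x) * rd a h z" using xy by simp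
  thus ?thesis using z by (simp add: algebra_simps)
qed

lemma sf_mono: assumes "0 \<le> x" "x < y" shows "sf a h x < sf a h y"
proof -
  have c: "rate a h x < rate a h y + rd a h y * (x - y)" using concave assms by simp
  have "x * rd a h y \<le> x * rd a h x" using rd_mono[OF assms] assms(1) by (simp add: mult_left_mono)
  thus ?thesis using c unfolding sf_def by (simp add: algebra_simps)
qed

lemma sf_mono': "0 \<le> x \<Longrightarrow> x \<le> y \<Longrightarrow> sf a h x \<le> sf a h y"
  using sf_mono by (cases "x = y") (auto simp: less_le)

lemma sf_0: "sf a h 0 \<le> 0"
proof -
  have "1 / A \<le> 1" "1 / A > 0" using A1 by (auto simp: divide_le_eq)
  hence "log 2 (1 / A) \<le> 0" by (subst log_le_zero_cancel_iff) auto
  thus ?thesis unfolding sf_def rate_def by simp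
qed

lemma isCont_sf: "P \<ge> 0 \<Longrightarrow> isCont (sf a h) P"
proof -
  assume P: "P \<ge> 0"
  have "isCont (rate a h) P" using rate_deriv'[OF P] by (rule DERIV_isCont)
  moreover have "isCont (rd a h) P"
    unfolding rd_def qf_def using q_pos[OF P] unfolding qf_def
    by (intro continuous_intros) auto
  ultimately show ?thesis unfolding sf_def[abs_def] by (intro continuous_intros)
qed

lemma sf_pos_ex: "\<exists>P2\<ge>0. sf a h P2 > 0"
proof -
  define P1 where "P1 = A / (H - D)"
  have HD: "H - D > 0" using good by simp
  have P1pos: "P1 > 0" unfolding P1_def by (rule divide_pos_pos) (use HD A1 in auto)
  have "P1 * (H - D) = A" unfolding P1_def using HD by simp
  hence num: "1 + P1 * H > A + P1 * D" by (simp add: algebra_simps)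
  have den: "A + P1 * D > 0" using P1pos D_nonneg A1
    by (metis add_pos_nonneg less_le_trans mult_nonneg_nonneg order_less_imp_le zero_less_one)
  have "(1 + P1 * H) / (A + P1 * D) > 1" using num den by simp
  hence r1: "rate a h P1 > 0" unfolding rate_def by simp
  define b where "b = bcoef a h"
  have bpos: "b > 0" using b_pos b_def by simp
  define P2 where "P2 = P1 + 1 + kap * g * P1 / (b * rate a h P1)"
  have t: "kap * g * P1 / (b * rate a h P1) \<ge> 0" using kap_pos g_pos P1pos bpos r1 by simp
  hence P2: "P2 > P1" "P2 > 0" unfolding P2_def using P1pos by auto
  have qb: "qf a h P2 \<ge> b * P2" unfolding qf_def b_def using d_nonneg A1 P2
    by (smt (verit) mult_nonneg_nonneg zero_le_power2)
  have "rd a h P2 * P1 \<le> kap * g / (b * P2) * P1"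
    unfolding rd_def using qb P1pos P2 bpos kap_pos g_pos q_pos[of P2]
    by (intro mult_right_mono divide_left_mono) (auto intro!: mult_pos_pos)
  also have "\<dots> = kap * g * P1 / (b * P2)" by simp
  also have "\<dots> \<le> rate a h P1"
  proof -
    have "kap * g * P1 \<le> rate a h P1 * (b * P2)"
    proof -
      have "P2 \<ge> kap * g * P1 / (b * rate a h P1)" unfolding P2_def using P1pos by simp
      hence "(b * rate a h P1) * P2 \<ge> kap * g * P1" using bpos r1 by (simp add: field_simps)
      thus ?thesis by (simp add: algebra_simps)
    qed
    thus ?thesis using bpos P2 by (simp add: divide_le_eq)
  qed
  finally have a1: "rd a h P2 * P1 \<le> rate a h P1" .
  have "rate a h P1 < rate a h P2 + rd a h P2 * (P1 - P2)" using concave[of P1 P2] P1pos P2 by simp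
  hence "sf a h P2 > 0" using a1 unfolding sf_def by (simp add: algebra_simps)
  thus ?thesis using P2 by (intro exI[of _ P2]) simp
qed

lemma coll_D: "collinear_vec h a \<Longrightarrow> D = 0"
proof -
  assume "collinear_vec h a"
  then obtain c where c: "h = c *\<^sub>R a" unfolding collinear_vec_def by auto
  have "H = c^2 * A" "inner h a = c * A" unfolding c
    by (simp_all add: power_mult_distrib power2_norm_eq_inner inner_commute)
  thus ?thesis by (simp add: power2_eq_square)
qed

lemma ncoll_D: "\<not> collinear_vec h a \<Longrightarrow> D > 0"
proof (rule ccontr)
  assume nc: "\<not> collinear_vec h a" and "\<not> D > 0"
  hence "D = 0" using D_nonneg by simp
  hence "\<bar>inner h a\<bar>^2 = (norm h * norm a)^2" by (simp add: power_mult_distrib)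
  hence "sqrt (\<bar>inner h a\<bar>^2) = sqrt ((norm h * norm a)^2)" by simp
  hence e: "\<bar>inner h a\<bar> = norm h * norm a" by simp
  have an: "norm a > 0"
  proof (rule ccontr)
    assume "\<not> norm a > 0" hence "norm a = 0" using norm_ge_zero[of a] by linarith
    thus False using A1 by simp
  qed
  from e consider "norm h *\<^sub>R a = norm a *\<^sub>R h" | "norm h *\<^sub>R a = - norm a *\<^sub>R h"
    using norm_cauchy_schwarz_abs_eq by blast
  thus False
  proof cases
    case 1
    hence "(1 / norm a) *\<^sub>R (norm h *\<^sub>R a) = h" using an by simp
    hence "h = (norm h / norm a) *\<^sub>R a" by simp
    thus False using nc unfolding collinear_vec_def by blast
  next
    case 2
    hence "(- 1 / norm a) *\<^sub>R (norm h *\<^sub>R a) = h" using an by simp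
    hence "h = (- norm h / norm a) *\<^sub>R a" by simp
    thus False using nc unfolding collinear_vec_def by blast
  qed
qed

lemma PK_q:
  assumes lam: "lam > 0"
  shows "qf a h (PKKT a h lam) = g / lam \<and> 2 * dcoef a h * PKKT a h lam + bcoef a h \<ge> 0"
proof (cases "collinear_vec h a")
  case True
  hence D0: "D = 0" by (rule coll_D)
  hence gHA: "g = H * A" by simp
  have "dcoef a h = 0" unfolding dcoef_def using D0 by simp
  moreover have "bcoef a h = H * A" unfolding bcoef_def using gHA by simp
  moreover have "PKKT a h lam = 1 / lam - 1 / H" unfolding PKKT_def using True by simp
  moreover have "H * A * (1 / lam - 1 / H) + A = H * A / lam"
  proof -
    have gen: "\<And>x y z::real. y > 0 \<Longrightarrow> y * z * (1 / x - 1 / y) + z = y * z / x"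
      by (simp add: field_simps)
    show ?thesis by (rule gen[OF H_pos])
  qed
  moreover have "H * A > 0" using H_pos A1 by (meson less_le_trans mult_pos_pos zero_less_one)
  ultimately show ?thesis unfolding qf_def using gHA by simp
next
  case False
  hence Dp: "D > 0" by (rule ncoll_D)
  define d b c where "d = dcoef a h" "b = bcoef a h" "c = ccoef a h lam"
  have dp: "d > 0" unfolding d_b_c_def dcoef_def using Dp H_pos by simp
  have disc: "b^2 - 4 * d * c = (H * A - D)^2 + 4 * d * g / lam"
    unfolding d_b_c_def dcoef_def bcoef_def ccoef_def using disc_gen[OF lam] by simp
  have "4 * d * g / lam \<ge> 0" using dp lam by simp
  hence dn: "b^2 - 4 * d * c \<ge> 0" unfolding disc by simp
  define r where "r = sqrt (b^2 - 4 * d * c)"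
  have r: "r^2 = b^2 - 4 * d * c" "r \<ge> 0" unfolding r_def using dn by auto
  have Q: "PKKT a h lam = (r - b) / (2 * d)" unfolding PKKT_def r_def d_b_c_def using False by simp
  have "d * ((r - b) / (2 * d))^2 + b * ((r - b) / (2 * d)) = (r^2 - b^2) / (4 * d)"
    using quad_gen[OF dp] .
  also have "\<dots> = - c" using r dp by simp
  finally have e: "d * ((r - b) / (2 * d))^2 + b * ((r - b) / (2 * d)) = - c" .
  have "qf a h (PKKT a h lam) = A - c" unfolding Q qf_def d_b_c_def[symmetric] using e by simp
  also have "\<dots> = g / lam" unfolding d_b_c_def ccoef_def by simp
  finally show ?thesis unfolding Q d_b_c_def[symmetric] using dp r by simp
qed

lemma PK_inv:
  assumes t: "t \<ge> 0"
  shows "PKKT a h (g / qf a h t) = t"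
proof -
  have qt: "qf a h t > 0" using q_pos[OF t] .
  have lam: "g / qf a h t > 0" using g_pos qt by simp
  define Q where "Q = PKKT a h (g / qf a h t)"
  have pk: "qf a h Q = g / (g / qf a h t)" "2 * dcoef a h * Q + bcoef a h \<ge> 0"
    using PK_q[OF lam] unfolding Q_def by blast+
  have qQ: "qf a h Q = qf a h t" using pk(1) g_pos qt by simp
  have "qf a h t - qf a h Q = (t - Q) * (dcoef a h * t + (dcoef a h * Q + bcoef a h))"
    unfolding qf_def by (simp add: algebra_simps power2_eq_square)
  moreover have "dcoef a h * t + (dcoef a h * Q + bcoef a h) > 0"
  proof -
    have "dcoef a h * t \<ge> 0" using d_nonneg t by simp
    thus ?thesis using pk(2) b_pos by linarith
  qed
  ultimately have "t = Q" using qQ by simp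
  thus ?thesis unfolding Q_def by simp
qed

lemma tang_iff:
  assumes "lam > 0" "PKKT a h lam \<ge> 0"
  shows "tangency a h lam \<longleftrightarrow> sf a h (PKKT a h lam) = 0"
proof -
  have "deriv (rate a h) (PKKT a h lam) = rd a h (PKKT a h lam)"
    using rate_deriv'[OF assms(2)] by (rule DERIV_imp_deriv)
  thus ?thesis unfolding tangency_def sf_def by simp
qed

lemma claimC:
  assumes lam: "lam > 0" and lo: "lam < lo" and mn: "\<forall>l>0. tangency a h l \<longrightarrow> lo \<le> l"
  shows "PKKT a h lam > 0 \<and> sf a h (PKKT a h lam) > 0"
proof (rule ccontr)
  define Q where "Q = PKKT a h lam"
  assume nc: "\<not> (PKKT a h lam > 0 \<and> sf a h (PKKT a h lam) > 0)"
  define Y where "Y = max Q 0"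
  have Y0: "Y \<ge> 0" unfolding Y_def by simp
  have sY: "sf a h Y \<le> 0"
  proof (cases "Q > 0")
    case True thus ?thesis using nc unfolding Y_def Q_def by auto
  next
    case False thus ?thesis using sf_0 unfolding Y_def by auto
  qed
  obtain P2 where P2: "P2 \<ge> 0" "sf a h P2 > 0" using sf_pos_ex by blast
  define Z where "Z = max P2 Y"
  have sZ: "sf a h Z > 0" using sf_mono'[of P2 Z] P2 unfolding Z_def by simp
  have YZ: "Y \<le> Z" unfolding Z_def by simp
  have "continuous_on {Y..Z} (sf a h)"
    using isCont_sf Y0 by (intro continuous_at_imp_continuous_on) auto
  then obtain t where t: "Y \<le> t" "t \<le> Z" "sf a h t = 0"
    using IVT'[of "sf a h" Y 0 Z] sY sZ YZ by auto
  have t0: "t \<ge> 0" using t Y0 by simp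
  define lt where "lt = g / qf a h t"
  have ltp: "lt > 0" unfolding lt_def using g_pos q_pos[OF t0] by simp
  have pk: "PKKT a h lt = t" unfolding lt_def by (rule PK_inv[OF t0])
  have "tangency a h lt" using tang_iff[OF ltp] pk t t0 by simp
  hence "lo \<le> lt" using mn ltp by blast
  have pq: "qf a h Q = g / lam" "2 * dcoef a h * Q + bcoef a h \<ge> 0"
    using PK_q[OF lam] unfolding Q_def by blast+
  have tQ: "t \<ge> Q" using t unfolding Y_def by simp
  have "qf a h t - qf a h Q = (t - Q) * (dcoef a h * (t - Q) + (2 * dcoef a h * Q + bcoef a h))"
    unfolding qf_def by (simp add: algebra_simps power2_eq_square)
  moreover have "dcoef a h * (t - Q) \<ge> 0" using d_nonneg tQ by simp
  ultimately have "qf a h t - qf a h Q \<ge> 0" using tQ pq(2) by simp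
  hence qq: "qf a h Q \<le> qf a h t" by simp
  have qQp: "qf a h Q > 0" using pq(1) g_pos lam by simp
  have "lt \<le> g / qf a h Q" unfolding lt_def using qq qQp g_pos
    by (intro divide_left_mono) (auto intro!: mult_pos_pos)
  also have "\<dots> = lam" using pq(1) g_pos lam by simp
  finally show False using \<open>lo \<le> lt\<close> lo by simp
qed

lemma lagr_good:
  assumes lam: "lam > 0" and lo: "lam < lo" and mn: "\<forall>l>0. tangency a h l \<longrightarrow> lo \<le> l"
    and x: "x \<ge> 0" "x \<noteq> PKKT a h lam"
  shows "max 0 (rate a h x) - kap * lam * x < max 0 (rate a h (PKKT a h lam)) - kap * lam * PKKT a h lam"
proof -
  define Q where "Q = PKKT a h lam"
  have C: "Q > 0" "sf a h Q > 0" using claimC[OF lam lo mn] unfolding Q_def by auto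
  have pq: "qf a h Q = g / lam" using PK_q[OF lam] unfolding Q_def by blast
  have rdQ: "rd a h Q = kap * lam" unfolding rd_def pq using g_pos lam by simp
  have s: "rate a h Q - kap * lam * Q > 0" using C(2) unfolding sf_def rdQ by (simp add: mult.commute)
  have mQ: "kap * lam * Q > 0" using kap_pos lam C(1) by simp
  have RQ: "max 0 (rate a h Q) = rate a h Q" using s mQ by simp
  show ?thesis
  proof (cases "rate a h x \<ge> 0")
    case True
    have "rate a h x < rate a h Q + rd a h Q * (x - Q)"
      using concave[of x Q] x C(1) unfolding Q_def by simp
    thus ?thesis using True RQ unfolding Q_def[symmetric] rdQ by (simp add: algebra_simps)
  next
    case False
    have "kap * lam * x \<ge> 0" using kap_pos lam x by simp
    thus ?thesis using False s RQ unfolding Q_def[symmetric] by simp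
  qed
qed

end

lemma rate_bad:
  fixes a h :: "'a::real_inner"
  assumes A1: "(norm a)\<^sup>2 \<ge> 1" and bad: "\<not> (norm h)\<^sup>2 > (norm h)\<^sup>2 * (norm a)\<^sup>2 - (inner h a)\<^sup>2"
    and x: "x \<ge> 0"
  shows "rate a h x \<le> 0"
proof -
  define H A D where "H = (norm h)\<^sup>2" "A = (norm a)\<^sup>2" "D = (norm h)\<^sup>2 * (norm a)\<^sup>2 - (inner h a)\<^sup>2"
  have HD: "H \<le> D" "H \<ge> 0" using bad unfolding H_A_D_def by auto
  have "x * H \<le> x * D" using HD x by (simp add: mult_left_mono)
  moreover have "x * H \<ge> 0" using HD x by simp
  ultimately have n: "1 + x * H > 0" "1 + x * H \<le> A + x * D" using A1 unfolding H_A_D_def by auto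
  hence "(1 + x * H) / (A + x * D) \<le> 1" "(1 + x * H) / (A + x * D) > 0" by auto
  hence "log 2 ((1 + x * H) / (A + x * D)) \<le> 0" by simp
  thus ?thesis unfolding rate_def H_A_D_def by simp
qed

lemma isCont_PKKT:
  fixes a h :: "'a::real_inner"
  assumes "goodh a h" "lam > 0"
  shows "isCont (PKKT a h) lam"
proof (cases "collinear_vec h a")
  case True
  thus ?thesis unfolding PKKT_def[abs_def] using assms(2) by (auto intro!: continuous_intros)
next
  case False
  hence "dcoef a h > 0" using goodh.ncoll_D[OF assms(1)] goodh.H_pos[OF assms(1)] unfolding dcoef_def by simp
  thus ?thesis unfolding PKKT_def[abs_def] ccoef_def using False assms(2) by (auto intro!: continuous_intros)
qed

lemma A_ge1:
  fixes a :: "real ^ 'n"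
  assumes a_int: "\<forall>i. a $ i \<in> \<int>" and a_nz: "a \<noteq> 0"
  shows "(norm a)\<^sup>2 \<ge> 1"
proof -
  obtain i where i: "a $ i \<noteq> 0" using a_nz by (metis vec_eq_iff zero_index)
  obtain k where k: "a $ i = of_int k" using a_int by (metis Ints_cases)
  have "k \<noteq> 0" using i k by simp
  hence "\<bar>k\<bar> \<ge> 1" by simp
  hence "(a $ i)^2 \<ge> 1" unfolding k
    by (metis abs_ge_self of_int_1_le_iff of_int_abs one_le_power power2_abs)
  also have "(a $ i)^2 = (\<Sum>j\<in>{i}. (a $ j)^2)" by simp
  also have "\<dots> \<le> (\<Sum>j\<in>UNIV. (a $ j)^2)" by (rule sum_mono2) auto
  also have "\<dots> = (norm a)^2" unfolding norm_vec_def L2_set_def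
    by (simp add: sum_nonneg real_norm_def power2_abs)
  finally show ?thesis .
qed


theorem theorem2:
  fixes a :: "real ^ 'n" and h :: "nat \<Rightarrow> real ^ 'n" and f :: "nat \<Rightarrow> real"
    and M :: nat and Pbar lam_o :: real
  assumes a_int: "\<forall>i. a $ i \<in> \<int>" and a_nz: "a \<noteq> 0"
    and M_pos: "M \<ge> 1"
    and h_nz: "\<forall>m\<in>{1..M}. h m \<noteq> 0"
    and f_pos: "\<forall>m\<in>{1..M}. f m > 0" and f_sum: "(\<Sum>m=1..M. f m) = 1"
    and Pbar_pos: "Pbar > 0"
    and lam_o_pos: "lam_o > 0"
    and lam_o_mem: "\<exists>m\<in>good_set a h M. tangency a (h m) lam_o"
    and lam_o_min: "\<forall>lam>0. (\<exists>m\<in>good_set a h M. tangency a (h m) lam) \<longrightarrow> lam_o \<le> lam"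
    and Pbar_gt: "Pbar > (\<Sum>m\<in>good_set a h M. f m * PKKT a (h m) lam_o)"
    and opt: "DP1_optimal a h f M Pbar P"
  shows "active_set M P = good_set a h M"
proof -
  define G where "G = good_set a h M"
  have A1: "(norm a)\<^sup>2 \<ge> 1" by (rule A_ge1[OF a_int a_nz])
  have GM: "G \<subseteq> {1..M}" unfolding G_def good_set_def by auto
  have finG: "finite G" using GM finite_subset by blast
  have gh: "\<And>m. m \<in> G \<Longrightarrow> goodh a (h m)"
    unfolding G_def good_set_def using A1 by unfold_locales auto
  have mn: "\<And>m. m \<in> G \<Longrightarrow> \<forall>l>0. tangency a (h m) l \<longrightarrow> lam_o \<le> l"
    using lam_o_min unfolding G_def by blast
  have C: "\<And>m lam. m \<in> G \<Longrightarrow> 0 < lam \<Longrightarrow> lam < lam_o \<Longrightarrow> PKKT a (h m) lam > 0"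
    using goodh.claimC[OF gh _ _ mn] by blast
  obtain m0 where m0: "m0 \<in> G" using lam_o_mem unfolding G_def by blast
  have fm0: "f m0 > 0" using f_pos m0 GM by auto
  define F where "F = (\<lambda>lam. \<Sum>m\<in>G. f m * PKKT a (h m) lam)"
  define X where "X = Pbar / f m0"
  have Xp: "X > 0" unfolding X_def using Pbar_pos fm0 by simp
  define g0 where "g0 = (inner (h m0) a)\<^sup>2"
  have g0p: "g0 > 0" unfolding g0_def using goodh.g_pos[OF gh[OF m0]] .
  have qX: "qf a (h m0) X > 0" using goodh.q_pos[OF gh[OF m0]] Xp by simp
  define lam1 where "lam1 = min (lam_o / 2) (g0 / qf a (h m0) X)"
  have l1p: "lam1 > 0" "lam1 < lam_o" unfolding lam1_def using lam_o_pos g0p qX by auto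
  have l1le: "lam1 \<le> g0 / qf a (h m0) X" unfolding lam1_def by simp
  define Q1 where "Q1 = PKKT a (h m0) lam1"
  have Q1p: "Q1 > 0" unfolding Q1_def using C[OF m0 l1p] .
  have qQ1: "qf a (h m0) Q1 = g0 / lam1" unfolding Q1_def g0_def using goodh.PK_q[OF gh[OF m0] l1p(1)] by blast
  have "g0 / lam1 \<ge> g0 / (g0 / qf a (h m0) X)"
    using l1le l1p g0p qX by (intro divide_left_mono) auto
  hence "qf a (h m0) Q1 \<ge> qf a (h m0) X" using qQ1 g0p by simp
  hence Q1X: "Q1 \<ge> X" using goodh.q_mono[OF gh[OF m0], of Q1 X] Q1p by force
  have "F lam1 \<ge> f m0 * PKKT a (h m0) lam1"
    unfolding F_def
  proof (rule member_le_sum[OF m0 _ finG])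
    fix m assume "m \<in> G - {m0}"
    thus "0 \<le> f m * PKKT a (h m) lam1" using C[of m lam1] l1p f_pos GM by (auto intro!: mult_nonneg_nonneg less_imp_le)
  qed
  moreover have "f m0 * PKKT a (h m0) lam1 \<ge> Pbar"
  proof -
    have "f m0 * Q1 \<ge> f m0 * X" using Q1X fm0 by simp
    thus ?thesis unfolding Q1_def X_def using fm0 by simp
  qed
  ultimately have F1: "F lam1 \<ge> Pbar" by simp
  have Fo: "F lam_o < Pbar" using Pbar_gt unfolding F_def G_def by simp
  have "continuous_on {lam1..lam_o} F"
    unfolding F_def using l1p
    by (intro continuous_at_imp_continuous_on ballI continuous_intros isCont_PKKT[OF gh]) auto
  then obtain ls where ls: "lam1 \<le> ls" "ls \<le> lam_o" "F ls = Pbar"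
    using IVT2'[of F lam_o Pbar lam1] F1 Fo l1p by auto
  have lsp: "ls > 0" "ls < lam_o" using ls l1p Fo by (auto simp: less_le)
  define Q where "Q = (\<lambda>m. if m \<in> G then PKKT a (h m) ls else 0)"
  define mu where "mu = kap * ls"
  define V where "V = (\<lambda>m x. max 0 (rate a (h m) x) - mu * x)"
  have key: "\<And>m x. m \<in> {1..M} \<Longrightarrow> x \<ge> 0 \<Longrightarrow> x \<noteq> Q m \<Longrightarrow> V m x < V m (Q m)"
  proof -
    fix m x assume m: "m \<in> {1..M}" and x: "x \<ge> 0" "x \<noteq> Q m"
    show "V m x < V m (Q m)"
    proof (cases "m \<in> G")
      case True
      thus ?thesis using goodh.lagr_good[OF gh[OF True] lsp mn[OF True] x(1)] x(2)
        unfolding V_def Q_def mu_def by simp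
    next
      case False
      hence bad: "\<not> (norm (h m))\<^sup>2 > (norm (h m))\<^sup>2 * (norm a)\<^sup>2 - (inner (h m) a)\<^sup>2"
        using m unfolding G_def good_set_def by auto
      have "rate a (h m) x \<le> 0" "rate a (h m) 0 \<le> 0" using rate_bad[OF A1 bad] x by auto
      moreover have "x > 0" using x False unfolding Q_def by simp
      moreover have "mu > 0" unfolding mu_def using kap_pos lsp by simp
      ultimately show ?thesis using False unfolding V_def Q_def by simp
    qed
  qed
  have Qnn: "\<And>m. Q m \<ge> 0" unfolding Q_def using C lsp by (auto intro: less_imp_le)
  have sumQ: "(\<Sum>m=1..M. f m * Q m) = Pbar"
  proof -
    have "(\<Sum>m=1..M. f m * Q m) = (\<Sum>m\<in>{1..M}. if m \<in> G then f m * PKKT a (h m) ls else 0)"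
      unfolding Q_def by (intro sum.cong) auto
    also have "\<dots> = (\<Sum>m\<in>{1..M} \<inter> G. f m * PKKT a (h m) ls)" by (rule sum.inter_restrict[symmetric]) simp
    also have "{1..M} \<inter> G = G" using GM by blast
    finally show ?thesis using ls(3) unfolding F_def by simp
  qed
  have featQ: "DP1_feasible f M Pbar Q" unfolding DP1_feasible_def using sumQ Qnn by simp
  have featP: "DP1_feasible f M Pbar P" and objle: "DP1_obj a h f M Q \<le> DP1_obj a h f M P"
    using opt featQ unfolding DP1_optimal_def by auto
  have Pnn: "\<And>m. m \<in> {1..M} \<Longrightarrow> P m \<ge> 0" and sumP: "(\<Sum>m=1..M. f m * P m) \<le> Pbar"
    using featP unfolding DP1_feasible_def by auto
  have decomp: "\<And>Z. DP1_obj a h f M Z = (\<Sum>m=1..M. f m * V m (Z m)) + mu * (\<Sum>m=1..M. f m * Z m)"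
    unfolding DP1_obj_def V_def by (simp add: sum_distrib_left sum.distrib[symmetric] algebra_simps)
  have PQ: "\<forall>m\<in>{1..M}. P m = Q m"
  proof (rule ccontr)
    assume "\<not> (\<forall>m\<in>{1..M}. P m = Q m)"
    then obtain k where k: "k \<in> {1..M}" "P k \<noteq> Q k" by blast
    have "(\<Sum>m=1..M. f m * V m (P m)) < (\<Sum>m=1..M. f m * V m (Q m))"
    proof (rule sum_strict_mono_ex1)
      show "\<forall>m\<in>{1..M}. f m * V m (P m) \<le> f m * V m (Q m)"
      proof
        fix m assume m: "m \<in> {1..M}"
        have "V m (P m) \<le> V m (Q m)" using key[OF m Pnn[OF m]] by (cases "P m = Q m") auto
        thus "f m * V m (P m) \<le> f m * V m (Q m)" using f_pos m by (simp add: mult_left_mono)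
      qed
      show "\<exists>m\<in>{1..M}. f m * V m (P m) < f m * V m (Q m)"
        using key[OF k(1) Pnn[OF k(1)] k(2)] f_pos k(1) by auto
    qed simp
    moreover have "mu * (\<Sum>m=1..M. f m * P m) \<le> mu * Pbar"
      using sumP kap_pos lsp unfolding mu_def by (simp add: mult_left_mono)
    ultimately have "DP1_obj a h f M P < DP1_obj a h f M Q"
      unfolding decomp sumQ by simp
    thus False using objle by simp
  qed
  have "active_set M P = {m \<in> {1..M}. Q m > 0}" unfolding active_set_def using PQ by auto
  also have "\<dots> = G" unfolding Q_def using GM C lsp by auto
  finally show ?thesis unfolding G_def .
qed

end
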